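(* Assume the setting below, with $u_0\in C^7_0[x_l,x_r]$. (i) If $U^0,U^1\in Z^0_h$ are arbitrary and $U^2,\dots,U^N\in Z^0_h$ satisfy the scheme (S), then for all $0\le n\le N-1$, $$E^n:=\frac{\|U^{n+1}\|^2+\|U^n\|^2}{2}+\alpha\frac{\|U^{n+1}_x\|^2+\|U^n_x\|^2}{2}+\lambda\frac{\|U^{n+1}_{x\bar x}\|^2+\|U^n_{x\bar x}\|^2}{2}=E^0.$$ (ii) If moreover $U^0_i=u_0(x_i)$ for $0\le i\le M$ and $U^1\in Z^0_h$ satisfies the starting scheme (CN), then $\|U^1\|^2+\alpha\|U^1_x\|^2+\lambda\|U^1_{x\bar x}\|^2=\|U^0\|^2+\alpha\|U^0_x\|^2+\lambda\|U^0_{x\bar x}\|^2$, and there is a constant $C>0$ independent of $h,\tau,n$ such that $\|U^n\|_\infty\le C$ and $\|U^n_x\|_\infty\le C$ for all $0\le n\le N$.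
   Context: Setting. Fix an integer $m\ge1$, real constants $a,b,c,\nu$, positive constants $\alpha,\lambda$, $x_l<x_r$, $T>0$. $C^7_0[x_l,x_r]$ is the set of seven times continuously differentiable functions on $[x_l,x_r]$ with compact support in $(x_l,x_r)$. Integers $M\ge4$, $N\ge2$; $h=(x_r-x_l)/M$, $\tau=T/N$, $x_i=x_l+ih$, $t_n=n\tau$. A grid function is a real vector $U=(U_i)_{i=-1}^{M+1}$; $Z^0_h$ is the set of grid functions with $U_{-1}=U_0=U_1=U_{M-1}=U_M=U_{M+1}=0$ (it is assumed $u_0(x_1)=u_0(x_{M-1})=0$, so $U^0\in Z^0_h$ is consistent). Operators: $(U_x)_i=(U_{i+1}-U_i)/h$, $(U_{\bar x})_i=(U_i-U_{i-1})/h$, $(U_{\hat x})_i=(U_{i+1}-U_{i-1})/(2h)$, compound subscripts are compositions (e.g. $(U_{x\bar x})_i=(U_{i+1}-2U_i+U_{i-1})/h^2$). $(U,V)=h\sum_{i=1}^{M-1}U_iV_i$, $\|U\|^2=(U,U)$ (also applied to difference quotients, summing over $1\le i\le M-1$), $\|U\|_\infty=\max_{1\le i\le M-1}|U_i|$. For a sequence of grid functions $U^0,\dots,U^N$: $\bar U^n=(U^{n+1}+U^{n-1})/2$, $(U^n)_t=(U^{n+1}-U^{n-1})/(2\tau)$, and e.g. $(U^n)_{x\bar xt}=\big((U^{n+1}-U^{n-1})/(2\tau)\big)_{x\bar x}$, $(U^n)_{xx\bar x\bar xt}=\big((U^{n+1}-U^{n-1})/(2\tau)\big)_{xx\bar x\bar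 x}$. For grid functions $V,W$, $V^mW$ denotes $i\mapsto V_i^mW_i$. Scheme (S): for $1\le n\le N-1$ and $2\le i\le M-2$, $$(U^n)_{t,i}+a(\bar U^n)_{\hat x,i}+\tfrac{b}{m+2}\big[(U^n_i)^m(\bar U^n)_{\hat x,i}+((U^n)^m\bar U^n)_{\hat x,i}\big]+c(\bar U^n)_{x\bar x\hat x,i}-\alpha(U^n)_{x\bar xt,i}+\lambda(U^n)_{xx\bar x\bar xt,i}-\nu(\bar U^n)_{xx\bar x\bar x\hat x,i}=0.$$ Starting scheme (CN): with $W=(U^1+U^0)/2$, for $2\le i\le M-2$, $$\tfrac{U^1_i-U^0_i}{\tau}+aW_{\hat x,i}+\tfrac{b}{m+2}\big[W_i^mW_{\hat x,i}+(W^mW)_{\hat x,i}\big]-\alpha\Big(\tfrac{U^1-U^0}{\tau}\Big)_{x\bar x,i}+cW_{x\bar x\hat x,i}+\lambda\Big(\tfrac{U^1-U^0}{\tau}\Big)_{xx\bar x\bar x,i}-\nu W_{xx\bar x\bar x\hat x,i}=0.$$ *)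

theory Defs
  imports "HOL-Analysis.Analysis"
begin

text \<open>Grid functions are modelled as \<open>int \<Rightarrow> real\<close>; only indices -1..M+1 matter.
  A sequence of grid functions is \<open>nat \<Rightarrow> int \<Rightarrow> real\<close>.\<close>

definition C7_0 :: "real \<Rightarrow> real \<Rightarrow> (real \<Rightarrow> real) \<Rightarrow> bool" where
  "C7_0 xl xr u \<longleftrightarrow>
     (\<exists>D :: nat \<Rightarrow> real \<Rightarrow> real.
        (\<forall>x\<in>{xl..xr}. D 0 x = u x) \<and>
        (\<forall>k<7. \<forall>x\<in>{xl..xr}. (D k has_real_derivative D (Suc k) x) (at x within {xl..xr})) \<and>
        continuous_on {xl..xr} (D 7)) \<and>
     (\<exists>a b. xl < a \<and> a \<le> b \<and> b < xr \<and> (\<forall>x\<in>{xl..xr}. x \<notin> {a..b} \<longrightarrow> u x = 0))"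

definition dx :: "real \<Rightarrow> (int \<Rightarrow> real) \<Rightarrow> int \<Rightarrow> real" where
  "dx h U i = (U (i+1) - U i) / h"

definition dxb :: "real \<Rightarrow> (int \<Rightarrow> real) \<Rightarrow> int \<Rightarrow> real" where
  "dxb h U i = (U i - U (i-1)) / h"

definition dxh :: "real \<Rightarrow> (int \<Rightarrow> real) \<Rightarrow> int \<Rightarrow> real" where
  "dxh h U i = (U (i+1) - U (i-1)) / (2*h)"

definition gip :: "real \<Rightarrow> nat \<Rightarrow> (int \<Rightarrow> real) \<Rightarrow> (int \<Rightarrow> real) \<Rightarrow> real" where
  "gip h M U V = h * (\<Sum>i\<in>{1..int M - 1}. U i * V i)"

definition gnorm2 :: "real \<Rightarrow> nat \<Rightarrow> (int \<Rightarrow> real) \<Rightarrow> real" where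
  "gnorm2 h M U = gip h M U U"

definition gsup :: "nat \<Rightarrow> (int \<Rightarrow> real) \<Rightarrow> real" where
  "gsup M U = Max ((\<lambda>i. \<bar>U i\<bar>) ` {1..int M - 1})"

definition Z0 :: "nat \<Rightarrow> (int \<Rightarrow> real) \<Rightarrow> bool" where
  "Z0 M U \<longleftrightarrow> U (-1) = 0 \<and> U 0 = 0 \<and> U 1 = 0 \<and>
     U (int M - 1) = 0 \<and> U (int M) = 0 \<and> U (int M + 1) = 0"

text \<open>Time averages / central time difference at level n (n \<ge> 1).\<close>
definition tbar :: "(nat \<Rightarrow> int \<Rightarrow> real) \<Rightarrow> nat \<Rightarrow> int \<Rightarrow> real" where
  "tbar U n i = (U (n+1) i + U (n-1) i) / 2"

definition tdiff :: "real \<Rightarrow> (nat \<Rightarrow> int \<Rightarrow> real) \<Rightarrow> nat \<Rightarrow> int \<Rightarrow> real" where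
  "tdiff \<tau> U n i = (U (n+1) i - U (n-1) i) / (2*\<tau>)"

definition scheme_S ::
  "nat \<Rightarrow> real \<Rightarrow> real \<Rightarrow> real \<Rightarrow> real \<Rightarrow> real \<Rightarrow> real \<Rightarrow> real \<Rightarrow> real
   \<Rightarrow> (nat \<Rightarrow> int \<Rightarrow> real) \<Rightarrow> nat \<Rightarrow> int \<Rightarrow> bool" where
  "scheme_S m a b c \<nu> \<alpha> lam h \<tau> U n i \<longleftrightarrow>
    (let Ub = tbar U n; Ut = tdiff \<tau> U n in
      Ut i + a * dxh h Ub i
      + b / (real m + 2) * ((U n i) ^ m * dxh h Ub i + dxh h (\<lambda>j. (U n j) ^ m * Ub j) i)
      + c * dx h (dxb h (dxh h Ub)) i
      - \<alpha> * dx h (dxb h Ut) i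
      + lam * dx h (dx h (dxb h (dxb h Ut))) i
      - \<nu> * dx h (dx h (dxb h (dxb h (dxh h Ub)))) i = 0)"

definition scheme_CN ::
  "nat \<Rightarrow> real \<Rightarrow> real \<Rightarrow> real \<Rightarrow> real \<Rightarrow> real \<Rightarrow> real \<Rightarrow> real \<Rightarrow> real
   \<Rightarrow> (int \<Rightarrow> real) \<Rightarrow> (int \<Rightarrow> real) \<Rightarrow> int \<Rightarrow> bool" where
  "scheme_CN m a b c \<nu> \<alpha> lam h \<tau> U0 U1 i \<longleftrightarrow>
    (let W = (\<lambda>j. (U1 j + U0 j) / 2); D = (\<lambda>j. (U1 j - U0 j) / \<tau>) in
      D i + a * dxh h W i
      + b / (real m + 2) * ((W i) ^ m * dxh h W i + dxh h (\<lambda>j. (W j) ^ m * W j) i)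
      - \<alpha> * dx h (dxb h D) i
      + c * dx h (dxb h (dxh h W)) i
      + lam * dx h (dx h (dxb h (dxb h D))) i
      - \<nu> * dx h (dx h (dxb h (dxb h (dxh h W)))) i = 0)"

definition energy :: "real \<Rightarrow> real \<Rightarrow> real \<Rightarrow> nat \<Rightarrow> (nat \<Rightarrow> int \<Rightarrow> real) \<Rightarrow> nat \<Rightarrow> real" where
  "energy \<alpha> lam h M U n =
     (gnorm2 h M (U (n+1)) + gnorm2 h M (U n)) / 2
     + \<alpha> * (gnorm2 h M (dx h (U (n+1))) + gnorm2 h M (dx h (U n))) / 2
     + lam * (gnorm2 h M (dx h (dxb h (U (n+1)))) + gnorm2 h M (dx h (dxb h (U n)))) / 2"

end

theory Submission
  imports Defs
begin


definition Om :: "nat \<Rightarrow> int set" where "Om M = {-20..int M + 20}"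
definition SS :: "nat \<Rightarrow> (int\<Rightarrow>real) \<Rightarrow> real" where "SS M f = sum f (Om M)"
definition sp :: "nat \<Rightarrow> int \<Rightarrow> (int\<Rightarrow>real) \<Rightarrow> bool" where
  "sp M K f \<longleftrightarrow> (\<forall>i. i < -K \<or> i > int M + K \<longrightarrow> f i = 0)"

lemma sum_supp:
  assumes "sp M 15 F" "{-15..int M+15} \<subseteq> A" "finite A"
  shows "sum F A = sum F {-15..int M+15}"
  by (rule sum.mono_neutral_right) (use assms in \<open>auto simp: sp_def\<close>)

lemma SS_shift1:
  assumes "sp M 15 F"
  shows "SS M (\<lambda>i. F (i+1)) = SS M F"
proof -
  have "SS M (\<lambda>i. F (i+1)) = sum F ((\<lambda>i. i+1) ` Om M)"
    unfolding SS_def by (subst sum.reindex) (auto simp: inj_on_def o_def)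
  also have "(\<lambda>i. i+1) ` Om M = {-19..int M+21}"
    unfolding Om_def by (auto simp: image_iff intro!: bexI[where x="_ - 1"])
  also have "sum F {-19..int M+21} = sum F {-15..int M+15}"
    by (rule sum_supp[OF assms]) auto
  also have "\<dots> = SS M F" unfolding SS_def Om_def
    by (rule sum_supp[OF assms, symmetric]) auto
  finally show ?thesis .
qed

lemma SS_shiftm1:
  assumes "sp M 15 F"
  shows "SS M (\<lambda>i. F (i-1)) = SS M F"
proof -
  have "SS M (\<lambda>i. F (i-1)) = sum F ((\<lambda>i. i-1) ` Om M)"
    unfolding SS_def by (subst sum.reindex) (auto simp: inj_on_def o_def)
  also have "(\<lambda>i. i-1) ` Om M = {-21..int M+19}"
    unfolding Om_def by (auto simp: image_iff intro!: bexI[where x="_ + 1"])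
  also have "sum F {-21..int M+19} = sum F {-15..int M+15}"
    by (rule sum_supp[OF assms]) auto
  also have "\<dots> = SS M F" unfolding SS_def Om_def
    by (rule sum_supp[OF assms, symmetric]) auto
  finally show ?thesis .
qed

lemma SS_add: "SS M (\<lambda>i. f i + g i) = SS M f + SS M g"
  unfolding SS_def by (rule sum.distrib)
lemma SS_diff: "SS M (\<lambda>i. f i - g i) = SS M f - SS M g"
  unfolding SS_def by (rule sum_subtractf)
lemma SS_mult: "SS M (\<lambda>i. c * f i) = c * SS M f"
  unfolding SS_def by (rule sum_distrib_left[symmetric])
lemma SS_div: "SS M (\<lambda>i. f i / c) = SS M f / c"
  unfolding SS_def by (rule sum_divide_distrib[symmetric])
lemma SS_zero: "SS M (\<lambda>i. 0) = 0"
  unfolding SS_def by simp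
lemma SS_cong: "(\<And>i. f i = g i) \<Longrightarrow> SS M f = SS M g"
  by (simp add: SS_def)

lemma sp_mono: "sp M K f \<Longrightarrow> K \<le> K' \<Longrightarrow> sp M K' f"
  unfolding sp_def by force
lemma sp_dx: "sp M K f \<Longrightarrow> sp M (K+1) (dx h f)"
  unfolding sp_def dx_def by force
lemma sp_dxb: "sp M K f \<Longrightarrow> sp M (K+1) (dxb h f)"
  unfolding sp_def dxb_def by force
lemma sp_dxh: "sp M K f \<Longrightarrow> sp M (K+1) (dxh h f)"
  unfolding sp_def dxh_def by force
lemma sp_mult1: "sp M K f \<Longrightarrow> sp M K (\<lambda>i. f i * g i)"
  unfolding sp_def by force
lemma sp_mult2: "sp M K f \<Longrightarrow> sp M K (\<lambda>i. g i * f i)"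
  unfolding sp_def by force
lemma sp_shiftm1: "sp M K f \<Longrightarrow> sp M (K+1) (\<lambda>i. f (i - 1))"
  unfolding sp_def by force
lemma sp_shift1: "sp M K f \<Longrightarrow> sp M (K+1) (\<lambda>i. f (i + 1))"
  unfolding sp_def by force

lemma adj_dx:
  assumes f: "sp M 13 f" and g: "sp M 13 g"
  shows "SS M (\<lambda>i. dx h f i * g i) = - SS M (\<lambda>i. f i * dxb h g i)"
proof -
  have F: "sp M 15 (\<lambda>i. f i * g (i - 1))"
    by (rule sp_mono[OF sp_mult1[OF f]]) simp
  have e1: "SS M (\<lambda>i. f (i+1) * g (i+1-1)) = SS M (\<lambda>i. f i * g (i - 1))"
    by (rule SS_shift1[OF F])
  have "SS M (\<lambda>i. dx h f i * g i) = SS M (\<lambda>i. (f (i+1) * g i - f i * g i) / h)"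
    by (rule SS_cong) (simp add: dx_def algebra_simps diff_divide_distrib)
  also have "\<dots> = (SS M (\<lambda>i. f (i+1) * g i) - SS M (\<lambda>i. f i * g i)) / h"
    by (simp add: SS_div SS_diff)
  also have "SS M (\<lambda>i. f (i+1) * g i) = SS M (\<lambda>i. f i * g (i - 1))"
    using e1 by simp
  finally have L: "SS M (\<lambda>i. dx h f i * g i) = (SS M (\<lambda>i. f i * g (i - 1)) - SS M (\<lambda>i. f i * g i)) / h" .
  have "- SS M (\<lambda>i. f i * dxb h g i) = - SS M (\<lambda>i. (f i * g i - f i * g (i - 1)) / h)"
    by (simp add: dxb_def algebra_simps diff_divide_distrib SS_def)
  also have "\<dots> = - ((SS M (\<lambda>i. f i * g i) - SS M (\<lambda>i. f i * g (i - 1))) / h)"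
    by (simp add: SS_div SS_diff)
  finally have R: "- SS M (\<lambda>i. f i * dxb h g i) = - ((SS M (\<lambda>i. f i * g i) - SS M (\<lambda>i. f i * g (i - 1))) / h)" .
  show ?thesis unfolding L R by (metis minus_diff_eq minus_divide_left)
qed

lemma adj_dxb:
  assumes f: "sp M 13 f" and g: "sp M 13 g"
  shows "SS M (\<lambda>i. dxb h f i * g i) = - SS M (\<lambda>i. f i * dx h g i)"
  using adj_dx[OF g f, of h] by (simp add: mult.commute)

lemma adj_dxh:
  assumes f: "sp M 13 f" and g: "sp M 13 g"
  shows "SS M (\<lambda>i. dxh h f i * g i) = - SS M (\<lambda>i. f i * dxh h g i)"
proof -
  have "dxh h f i = (dx h f i + dxb h f i) / 2" for f i
    by (cases "h = 0") (simp_all add: dx_def dxb_def dxh_def field_simps)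
  hence "SS M (\<lambda>i. dxh h f i * g i) = (SS M (\<lambda>i. dx h f i * g i) + SS M (\<lambda>i. dxb h f i * g i))/2"
    by (simp add: SS_add SS_div add_divide_distrib ring_distribs)
  also have "\<dots> = - (SS M (\<lambda>i. f i * dxb h g i) + SS M (\<lambda>i. f i * dx h g i))/2"
    by (simp add: adj_dx[OF f g] adj_dxb[OF f g])
  also have "\<dots> = - SS M (\<lambda>i. f i * dxh h g i)"
    using \<open>\<And>f i. dxh h f i = _\<close>
    by (simp add: SS_add[symmetric] SS_div[symmetric] add_divide_distrib ring_distribs add.commute)
  finally show ?thesis .
qed

lemma dxb_shift: "dxb h f (i+1) = dx h f i"
  by (simp add: dx_def dxb_def)

lemma comm1: "dxh h (dx h (dxb h w)) i = dx h (dxb h (dxh h w)) i"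
  by (cases "h=0") (simp_all add: dx_def dxb_def dxh_def field_simps)

lemma comm2: "dxh h (dx h (dx h (dxb h (dxb h w)))) i = dx h (dx h (dxb h (dxb h (dxh h w)))) i"
  by (cases "h=0") (simp_all add: dx_def dxb_def dxh_def field_simps)

lemma idB:
  assumes d: "sp M 0 d" and w: "sp M 0 w"
  shows "SS M (\<lambda>i. dx h (dxb h d) i * w i) = - SS M (\<lambda>i. dx h d i * dx h w i)"
proof -
  have d1: "sp M 13 (dxb h d)" by (rule sp_mono[OF sp_dxb[OF d]]) simp
  have w0: "sp M 13 w" by (rule sp_mono[OF w]) simp
  have F: "sp M 15 (\<lambda>i. dxb h d i * dxb h w i)"
    by (rule sp_mono[OF sp_mult1[OF sp_dxb[OF d]]]) simp
  show ?thesis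
    using adj_dx[OF d1 w0, of h] SS_shift1[OF F] by (simp add: dxb_shift)
qed

lemma idC:
  assumes d: "sp M 0 d" and w: "sp M 0 w"
  shows "SS M (\<lambda>i. dx h (dx h (dxb h (dxb h d))) i * w i) = SS M (\<lambda>i. dx h (dxb h d) i * dx h (dxb h w) i)"
proof -
  have d1: "sp M 13 (dx h (dxb h (dxb h d)))" by (rule sp_mono[OF sp_dx[OF sp_dxb[OF sp_dxb[OF d]]]]) simp
  have d2: "sp M 13 (dxb h (dxb h d))" by (rule sp_mono[OF sp_dxb[OF sp_dxb[OF d]]]) simp
  have w0: "sp M 13 w" by (rule sp_mono[OF w]) simp
  have w1: "sp M 13 (dxb h w)" by (rule sp_mono[OF sp_dxb[OF w]]) simp
  have F: "sp M 15 (\<lambda>i. dxb h (dxb h d) i * dxb h (dxb h w) i)"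
    by (rule sp_mono[OF sp_mult1[OF sp_dxb[OF sp_dxb[OF d]]]]) simp
  show ?thesis
    using adj_dx[OF d1 w0, of h] adj_dx[OF d2 w1, of h] SS_shift1[OF F] by (simp add: dxb_shift)
qed

lemma idD:
  assumes w: "sp M 0 w"
  shows "SS M (\<lambda>i. dxh h w i * w i) = 0"
proof -
  have w0: "sp M 13 w" by (rule sp_mono[OF w]) simp
  show ?thesis using adj_dxh[OF w0 w0, of h] by (simp add: mult.commute)
qed

lemma idE:
  assumes w: "sp M 0 w"
  shows "SS M (\<lambda>i. dx h (dxb h (dxh h w)) i * w i) = 0"
proof -
  have w0: "sp M 13 w" by (rule sp_mono[OF w]) simp
  have w1: "sp M 13 (dxb h w)" by (rule sp_mono[OF sp_dxb[OF w]]) simp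
  have w2: "sp M 13 (dx h (dxb h w))" by (rule sp_mono[OF sp_dx[OF sp_dxb[OF w]]]) simp
  have v1: "sp M 13 (dxh h w)" by (rule sp_mono[OF sp_dxh[OF w]]) simp
  have v2: "sp M 13 (dxb h (dxh h w))" by (rule sp_mono[OF sp_dxb[OF sp_dxh[OF w]]]) simp
  have "SS M (\<lambda>i. dx h (dxb h (dxh h w)) i * w i) = - SS M (\<lambda>i. dxb h (dxh h w) i * dxb h w i)"
    by (rule adj_dx[OF v2 w0])
  also have "\<dots> = SS M (\<lambda>i. dxh h w i * dx h (dxb h w) i)"
    using adj_dxb[OF v1 w1, of h] by simp
  also have "\<dots> = - SS M (\<lambda>i. w i * dxh h (dx h (dxb h w)) i)"
    by (rule adj_dxh[OF w0 w2])
  also have "\<dots> = - SS M (\<lambda>i. dx h (dxb h (dxh h w)) i * w i)"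
    by (simp add: comm1 mult.commute)
  finally show ?thesis by simp
qed

lemma idF:
  assumes w: "sp M 0 w"
  shows "SS M (\<lambda>i. dx h (dx h (dxb h (dxb h (dxh h w)))) i * w i) = 0"
proof -
  have w0: "sp M 13 w" by (rule sp_mono[OF w]) simp
  have w1: "sp M 13 (dxb h w)" by (rule sp_mono[OF sp_dxb[OF w]]) simp
  have w2: "sp M 13 (dxb h (dxb h w))" by (rule sp_mono[OF sp_dxb[OF sp_dxb[OF w]]]) simp
  have w3: "sp M 13 (dx h (dxb h (dxb h w)))" by (rule sp_mono[OF sp_dx[OF sp_dxb[OF sp_dxb[OF w]]]]) simp
  have w4: "sp M 13 (dx h (dx h (dxb h (dxb h w))))" by (rule sp_mono[OF sp_dx[OF sp_dx[OF sp_dxb[OF sp_dxb[OF w]]]]]) simp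
  have v1: "sp M 13 (dxh h w)" by (rule sp_mono[OF sp_dxh[OF w]]) simp
  have v2: "sp M 13 (dxb h (dxh h w))" by (rule sp_mono[OF sp_dxb[OF sp_dxh[OF w]]]) simp
  have v3: "sp M 13 (dxb h (dxb h (dxh h w)))" by (rule sp_mono[OF sp_dxb[OF sp_dxb[OF sp_dxh[OF w]]]]) simp
  have v4: "sp M 13 (dx h (dxb h (dxb h (dxh h w))))" by (rule sp_mono[OF sp_dx[OF sp_dxb[OF sp_dxb[OF sp_dxh[OF w]]]]]) simp
  have "SS M (\<lambda>i. dx h (dx h (dxb h (dxb h (dxh h w)))) i * w i) = - SS M (\<lambda>i. dx h (dxb h (dxb h (dxh h w))) i * dxb h w i)"
    by (rule adj_dx[OF v4 w0])
  also have "\<dots> = SS M (\<lambda>i. dxb h (dxb h (dxh h w)) i * dxb h (dxb h w) i)"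
    using adj_dx[OF v3 w1, of h] by simp
  also have "\<dots> = - SS M (\<lambda>i. dxb h (dxh h w) i * dx h (dxb h (dxb h w)) i)"
    by (rule adj_dxb[OF v2 w2])
  also have "\<dots> = SS M (\<lambda>i. dxh h w i * dx h (dx h (dxb h (dxb h w))) i)"
    using adj_dxb[OF v1 w3, of h] by simp
  also have "\<dots> = - SS M (\<lambda>i. w i * dxh h (dx h (dx h (dxb h (dxb h w)))) i)"
    by (rule adj_dxh[OF w0 w4])
  also have "\<dots> = - SS M (\<lambda>i. dx h (dx h (dxb h (dxb h (dxh h w)))) i * w i)"
    by (simp add: comm2 mult.commute)
  finally show ?thesis by simp
qed

lemma idG:
  assumes w: "sp M 0 w"
  shows "SS M (\<lambda>i. ((u i)^m * dxh h w i + dxh h (\<lambda>j. (u j)^m * w j) i) * w i) = 0"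
proof -
  have w0: "sp M 13 w" by (rule sp_mono[OF w]) simp
  have z: "sp M 13 (\<lambda>j. (u j)^m * w j)" by (rule sp_mult2[OF w0])
  have "SS M (\<lambda>i. ((u i)^m * dxh h w i + dxh h (\<lambda>j. (u j)^m * w j) i) * w i)
      = SS M (\<lambda>i. ((u i)^m * w i) * dxh h w i) + SS M (\<lambda>i. dxh h (\<lambda>j. (u j)^m * w j) i * w i)"
    by (simp add: SS_add[symmetric] algebra_simps)
  also have "\<dots> = 0" using adj_dxh[OF z w0, of h] by simp
  finally show ?thesis .
qed

lemma dx_lin: "dx h (\<lambda>j. (f j + g j) / c) i = (dx h f i + dx h g i) / c"
  "dx h (\<lambda>j. (f j - g j) / c) i = (dx h f i - dx h g i) / c"
  "dxb h (\<lambda>j. (f j + g j) / c) i = (dxb h f i + dxb h g i) / c"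
  "dxb h (\<lambda>j. (f j - g j) / c) i = (dxb h f i - dxb h g i) / c"
  by (simp_all add: dx_def dxb_def diff_divide_distrib add_divide_distrib mult.commute)

lemma core:
  fixes p q u :: "int \<Rightarrow> real"
  assumes p: "sp M 0 p" and q: "sp M 0 q" and t: "t \<noteq> 0"
    and H: "\<And>i. (d i + a * dxh h w i + bb * ((u i)^m * dxh h w i + dxh h (\<lambda>j. (u j)^m * w j) i)
       + c * dx h (dxb h (dxh h w)) i - al * dx h (dxb h d) i + lam * dx h (dx h (dxb h (dxb h d))) i
       - nu * dx h (dx h (dxb h (dxb h (dxh h w)))) i) * w i = 0"
    and dd: "d = (\<lambda>i. (p i - q i) / t)" and ww: "w = (\<lambda>i. (p i + q i) / 2)"
  shows "SS M (\<lambda>i. (p i)^2) + al * SS M (\<lambda>i. (dx h p i)^2) + lam * SS M (\<lambda>i. (dx h (dxb h p) i)^2)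
       = SS M (\<lambda>i. (q i)^2) + al * SS M (\<lambda>i. (dx h q i)^2) + lam * SS M (\<lambda>i. (dx h (dxb h q) i)^2)"
proof -
  have spd: "sp M 0 d" using p q unfolding dd sp_def by auto
  have spw: "sp M 0 w" using p q unfolding ww sp_def by auto
  let ?G = "\<lambda>i. ((u i)^m * dxh h w i + dxh h (\<lambda>j. (u j)^m * w j) i) * w i"
  have "0 = SS M (\<lambda>i. (d i + a * dxh h w i + bb * ((u i)^m * dxh h w i + dxh h (\<lambda>j. (u j)^m * w j) i)
       + c * dx h (dxb h (dxh h w)) i - al * dx h (dxb h d) i + lam * dx h (dx h (dxb h (dxb h d))) i
       - nu * dx h (dx h (dxb h (dxb h (dxh h w)))) i) * w i)"
    by (simp add: H SS_zero)
  also have "\<dots> = SS M (\<lambda>i. d i * w i) + a * SS M (\<lambda>i. dxh h w i * w i) + bb * SS M ?G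
     + c * SS M (\<lambda>i. dx h (dxb h (dxh h w)) i * w i) - al * SS M (\<lambda>i. dx h (dxb h d) i * w i)
     + lam * SS M (\<lambda>i. dx h (dx h (dxb h (dxb h d))) i * w i)
     - nu * SS M (\<lambda>i. dx h (dx h (dxb h (dxb h (dxh h w)))) i * w i)"
    unfolding SS_def by (simp add: algebra_simps sum.distrib sum_subtractf sum_distrib_left)
  also have "\<dots> = SS M (\<lambda>i. d i * w i) + al * SS M (\<lambda>i. dx h d i * dx h w i)
     + lam * SS M (\<lambda>i. dx h (dxb h d) i * dx h (dxb h w) i)"
    using idB[OF spd spw, of h] idC[OF spd spw, of h] idD[OF spw, of h] idE[OF spw, of h]
      idF[OF spw, of h] idG[OF spw, of u m h] by simp
  also have "\<dots> = ((SS M (\<lambda>i. (p i)^2) + al * SS M (\<lambda>i. (dx h p i)^2) + lam * SS M (\<lambda>i. (dx h (dxb h p) i)^2))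
       - (SS M (\<lambda>i. (q i)^2) + al * SS M (\<lambda>i. (dx h q i)^2) + lam * SS M (\<lambda>i. (dx h (dxb h q) i)^2))) / (2*t)"
  proof -
    have e1: "d i * w i = ((p i)^2 - (q i)^2) / (2*t)" for i
      unfolding dd ww using t by (simp add: field_simps power2_eq_square)
    have e2: "dx h d i * dx h w i = ((dx h p i)^2 - (dx h q i)^2) / (2*t)" for i
      unfolding dd ww using t by (simp add: dx_lin field_simps power2_eq_square)
    have e3: "dx h (dxb h d) i * dx h (dxb h w) i = ((dx h (dxb h p) i)^2 - (dx h (dxb h q) i)^2) / (2*t)" for i
    proof -
      have a1: "dxb h d = (\<lambda>i. (dxb h p i - dxb h q i) / t)" unfolding dd by (rule ext) (simp add: dx_lin)
      have a2: "dxb h w = (\<lambda>i. (dxb h p i + dxb h q i) / 2)" unfolding ww by (rule ext) (simp add: dx_lin)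
      show ?thesis unfolding a1 a2 using t by (simp add: dx_lin field_simps power2_eq_square)
    qed
    show ?thesis
      unfolding e1 e2 e3 SS_div SS_diff using t by (simp add: divide_simps) (simp add: algebra_simps)
  qed
  finally show ?thesis using t by (simp add: field_simps)
qed

definition rr :: "nat \<Rightarrow> (int \<Rightarrow> real) \<Rightarrow> int \<Rightarrow> real" where
  "rr M f i = (if 2 \<le> i \<and> i \<le> int M - 2 then f i else 0)"

definition Qf :: "real \<Rightarrow> real \<Rightarrow> real \<Rightarrow> nat \<Rightarrow> (int \<Rightarrow> real) \<Rightarrow> real" where
  "Qf al lam h M f = gnorm2 h M f + al * gnorm2 h M (dx h f) + lam * gnorm2 h M (dx h (dxb h f))"

lemma sp_rr: "sp M 0 (rr M f)"
  unfolding sp_def rr_def by auto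

lemma rr_eq: "Z0 M f \<Longrightarrow> -1 \<le> j \<Longrightarrow> j \<le> int M + 1 \<Longrightarrow> rr M f j = f j"
  unfolding rr_def Z0_def
  by (cases "j = -1 \<or> j = 0 \<or> j = 1 \<or> j = int M - 1 \<or> j = int M \<or> j = int M + 1") auto

lemma SS_restrict:
  assumes "\<And>i. i \<in> Om M - {1..int M - 1} \<Longrightarrow> G i = 0" "\<And>i. i \<in> {1..int M - 1} \<Longrightarrow> G i = F i"
  shows "SS M G = (\<Sum>i\<in>{1..int M - 1}. F i)"
proof -
  have "SS M G = (\<Sum>i\<in>{1..int M - 1}. G i)"
    unfolding SS_def by (rule sum.mono_neutral_right) (use assms(1) in \<open>auto simp: Om_def\<close>)
  also have "\<dots> = (\<Sum>i\<in>{1..int M - 1}. F i)" by (rule sum.cong) (use assms(2) in auto)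
  finally show ?thesis .
qed

lemma gn0: assumes Z: "Z0 M f" shows "gnorm2 h M f = h * SS M (\<lambda>i. (rr M f i)^2)"
  unfolding gnorm2_def gip_def
  apply (subst SS_restrict[where F="\<lambda>i. f i * f i"])
  subgoal for i by (auto simp: rr_def Om_def)
  subgoal for i using rr_eq[OF Z, of i] by (auto simp: power2_eq_square)
  by simp

lemma gn1: assumes Z: "Z0 M f" shows "gnorm2 h M (dx h f) = h * SS M (\<lambda>i. (dx h (rr M f) i)^2)"
  unfolding gnorm2_def gip_def
  apply (subst SS_restrict[where F="\<lambda>i. dx h f i * dx h f i"])
  subgoal for i by (auto simp: rr_def Om_def dx_def)
  subgoal for i using rr_eq[OF Z, of i] rr_eq[OF Z, of "i+1"] by (auto simp: power2_eq_square dx_def)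
  by simp

lemma gn2: assumes Z: "Z0 M f" shows "gnorm2 h M (dx h (dxb h f)) = h * SS M (\<lambda>i. (dx h (dxb h (rr M f)) i)^2)"
  unfolding gnorm2_def gip_def
  apply (subst SS_restrict[where F="\<lambda>i. dx h (dxb h f) i * dx h (dxb h f) i"])
  subgoal for i by (auto simp: rr_def Om_def dx_def dxb_def)
  subgoal for i using rr_eq[OF Z, of i] rr_eq[OF Z, of "i+1"] rr_eq[OF Z, of "i-1"] by (auto simp: power2_eq_square dx_def dxb_def)
  by simp

lemma Qf_SS: "Z0 M f \<Longrightarrow> Qf al lam h M f = h * (SS M (\<lambda>i. (rr M f i)^2) + al * SS M (\<lambda>i. (dx h (rr M f) i)^2)
   + lam * SS M (\<lambda>i. (dx h (dxb h (rr M f)) i)^2))"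
  unfolding Qf_def by (simp add: gn0 gn1 gn2 algebra_simps)

lemma step_S:
  assumes Zp: "Z0 M (U (n+1))" and Zq: "Z0 M (U (n-1))" and tau: "\<tau> \<noteq> 0"
    and S: "\<And>i. 2 \<le> i \<Longrightarrow> i \<le> int M - 2 \<Longrightarrow> scheme_S m a b c nu al lam h \<tau> U n i"
  shows "Qf al lam h M (U (n+1)) = Qf al lam h M (U (n-1))"
proof -
  define p where "p = rr M (U (n+1))"
  define q where "q = rr M (U (n-1))"
  define d where "d = (\<lambda>i. (p i - q i) / (2*\<tau>))"
  define w where "w = (\<lambda>i. (p i + q i) / 2)"
  have ew: "w j = tbar U n j" if "-1 \<le> j" "j \<le> int M + 1" for j
    using rr_eq[OF Zp that] rr_eq[OF Zq that] by (simp add: w_def p_def q_def tbar_def)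
  have ed: "d j = tdiff \<tau> U n j" if "-1 \<le> j" "j \<le> int M + 1" for j
    using rr_eq[OF Zp that] rr_eq[OF Zq that] by (simp add: d_def p_def q_def tdiff_def)
  have H: "(d i + a * dxh h w i + (b / (real m + 2)) * (((U n) i)^m * dxh h w i + dxh h (\<lambda>j. ((U n) j)^m * w j) i)
       + c * dx h (dxb h (dxh h w)) i - al * dx h (dxb h d) i + lam * dx h (dx h (dxb h (dxb h d))) i
       - nu * dx h (dx h (dxb h (dxb h (dxh h w)))) i) * w i = 0" for i
  proof (cases "2 \<le> i \<and> i \<le> int M - 2")
    case True
    then have i1: "2 \<le> i" and i2: "i \<le> int M - 2" by auto
    have "(d i + a * dxh h w i + (b / (real m + 2)) * (((U n) i)^m * dxh h w i + dxh h (\<lambda>j. ((U n) j)^m * w j) i)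
       + c * dx h (dxb h (dxh h w)) i - al * dx h (dxb h d) i + lam * dx h (dx h (dxb h (dxb h d))) i
       - nu * dx h (dx h (dxb h (dxb h (dxh h w)))) i)
      = (tdiff \<tau> U n i + a * dxh h (tbar U n) i + (b / (real m + 2)) * (((U n) i)^m * dxh h (tbar U n) i + dxh h (\<lambda>j. ((U n) j)^m * tbar U n j) i)
       + c * dx h (dxb h (dxh h (tbar U n))) i - al * dx h (dxb h (tdiff \<tau> U n)) i + lam * dx h (dx h (dxb h (dxb h (tdiff \<tau> U n)))) i
       - nu * dx h (dx h (dxb h (dxb h (dxh h (tbar U n))))) i)"
      using i1 i2 by (simp add: dx_def dxb_def dxh_def ew ed)
    also have "\<dots> = 0" using S[OF i1 i2] unfolding scheme_S_def Let_def by simp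
    finally show ?thesis by simp
  next
    case False
    then have "w i = 0" by (auto simp: w_def p_def q_def rr_def)
    then show ?thesis by simp
  qed
  have "SS M (\<lambda>i. (p i)^2) + al * SS M (\<lambda>i. (dx h p i)^2) + lam * SS M (\<lambda>i. (dx h (dxb h p) i)^2)
       = SS M (\<lambda>i. (q i)^2) + al * SS M (\<lambda>i. (dx h q i)^2) + lam * SS M (\<lambda>i. (dx h (dxb h q) i)^2)"
    by (rule core[OF _ _ _ H d_def w_def]) (use tau in \<open>simp_all add: p_def q_def sp_rr\<close>)
  then show ?thesis unfolding Qf_SS[OF Zp] Qf_SS[OF Zq] p_def q_def by simp
qed

lemma step_CN:
  assumes Zp: "Z0 M U1" and Zq: "Z0 M U0" and tau: "\<tau> \<noteq> 0"
    and S: "\<And>i. 2 \<le> i \<Longrightarrow> i \<le> int M - 2 \<Longrightarrow> scheme_CN m a b c nu al lam h \<tau> U0 U1 i"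
  shows "Qf al lam h M U1 = Qf al lam h M U0"
proof -
  define p where "p = rr M U1"
  define q where "q = rr M U0"
  define d where "d = (\<lambda>i. (p i - q i) / \<tau>)"
  define w where "w = (\<lambda>i. (p i + q i) / 2)"
  define W where "W = (\<lambda>j. (U1 j + U0 j) / 2)"
  define D where "D = (\<lambda>j. (U1 j - U0 j) / \<tau>)"
  have ew: "w j = W j" if "-1 \<le> j" "j \<le> int M + 1" for j
    using rr_eq[OF Zp that] rr_eq[OF Zq that] by (simp add: w_def p_def q_def W_def)
  have ed: "d j = D j" if "-1 \<le> j" "j \<le> int M + 1" for j
    using rr_eq[OF Zp that] rr_eq[OF Zq that] by (simp add: d_def p_def q_def D_def)
  have H: "(d i + a * dxh h w i + (b / (real m + 2)) * ((W i)^m * dxh h w i + dxh h (\<lambda>j. (W j)^m * w j) i)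
       + c * dx h (dxb h (dxh h w)) i - al * dx h (dxb h d) i + lam * dx h (dx h (dxb h (dxb h d))) i
       - nu * dx h (dx h (dxb h (dxb h (dxh h w)))) i) * w i = 0" for i
  proof (cases "2 \<le> i \<and> i \<le> int M - 2")
    case True
    then have i1: "2 \<le> i" and i2: "i \<le> int M - 2" by auto
    have "(d i + a * dxh h w i + (b / (real m + 2)) * ((W i)^m * dxh h w i + dxh h (\<lambda>j. (W j)^m * w j) i)
       + c * dx h (dxb h (dxh h w)) i - al * dx h (dxb h d) i + lam * dx h (dx h (dxb h (dxb h d))) i
       - nu * dx h (dx h (dxb h (dxb h (dxh h w)))) i)
      = (D i + a * dxh h W i + (b / (real m + 2)) * ((W i)^m * dxh h W i + dxh h (\<lambda>j. (W j)^m * W j) i)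
       - al * dx h (dxb h D) i + c * dx h (dxb h (dxh h W)) i + lam * dx h (dx h (dxb h (dxb h D))) i
       - nu * dx h (dx h (dxb h (dxb h (dxh h W)))) i)"
      using i1 i2 by (simp add: dx_def dxb_def dxh_def ew ed)
    also have "\<dots> = 0" using S[OF i1 i2] unfolding scheme_CN_def Let_def W_def D_def by simp
    finally show ?thesis by simp
  next
    case False
    then have "w i = 0" by (auto simp: w_def p_def q_def rr_def)
    then show ?thesis by simp
  qed
  have "SS M (\<lambda>i. (p i)^2) + al * SS M (\<lambda>i. (dx h p i)^2) + lam * SS M (\<lambda>i. (dx h (dxb h p) i)^2)
       = SS M (\<lambda>i. (q i)^2) + al * SS M (\<lambda>i. (dx h q i)^2) + lam * SS M (\<lambda>i. (dx h (dxb h q) i)^2)"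
    by (rule core[OF _ _ _ H d_def w_def]) (use tau in \<open>simp_all add: p_def q_def sp_rr\<close>)
  then show ?thesis unfolding Qf_SS[OF Zp] Qf_SS[OF Zq] p_def q_def by simp
qed




lemma mvt_within:
  fixes F F' :: "real \<Rightarrow> real"
  assumes der: "\<And>x. x \<in> {xl..xr} \<Longrightarrow> (F has_real_derivative F' x) (at x within {xl..xr})"
    and ab: "xl \<le> y" "0 < h" "y + h \<le> xr"
  shows "\<exists>z. y < z \<and> z < y + h \<and> (F (y+h) - F y) / h = F' z"
proof -
  have "\<exists>z\<in>{y<..<y+h}. F (y+h) - F y = (*) (F' z) (y + h - y)"
  proof (rule mvt_simple)
    show "y < y + h" using ab by simp
    fix x assume x: "y \<le> x" "x \<le> y + h"
    have "(F has_real_derivative F' x) (at x within {xl..xr})" using der x ab by simp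
    then have "(F has_real_derivative F' x) (at x within {y..y+h})"
      by (rule DERIV_subset) (use ab in auto)
    then show "(F has_derivative (*) (F' x)) (at x within {y..y+h})"
      by (simp add: has_field_derivative_def)
  qed
  then obtain z where "z\<in>{y<..<y+h}" "F (y+h) - F y = F' z * h" by auto
  then show ?thesis using ab by auto
qed

lemma deriv_bound:
  fixes F F' :: "real \<Rightarrow> real"
  assumes "\<And>x. x \<in> {xl..xr} \<Longrightarrow> (F has_real_derivative F' x) (at x within {xl..xr})"
  shows "\<exists>K. \<forall>x\<in>{xl..xr}. \<bar>F x\<bar> \<le> K"
proof -
  have "continuous_on {xl..xr} F"
    unfolding continuous_on_eq_continuous_within using assms DERIV_continuous by blast
  then have "bounded (F ` {xl..xr})"
    by (intro compact_imp_bounded compact_continuous_image) auto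
  then show ?thesis unfolding bounded_real by auto
qed

lemma sob_step:
  fixes g :: "int \<Rightarrow> real"
  assumes g0: "g 0 = 0" and h: "0 < h" "h \<le> L"
  shows "0 \<le> k \<Longrightarrow> (g k)^2 \<le> (1+L)*h*(\<Sum>i\<in>{0..<k}. (dx h g i)^2) + h*(\<Sum>i\<in>{0..<k}. (g i)^2)"
proof (induct k rule: int_ge_induct)
  case base
  then show ?case using g0 by simp
next
  case (step i)
  have set: "{0..<i+1} = insert i {0..<i}" using step(1) by auto
  define a where "a = dx h g i"
  have gi: "g (i+1) = g i + h * a" using h unfolding a_def dx_def by simp
  have k1: "2 * h * a * g i \<le> h * (a^2 + (g i)^2)"
  proof -
    have "0 \<le> h * (a - g i)^2" using h by simp
    moreover have "h*(a^2 + (g i)^2) - 2*h*a*g i = h*(a - g i)^2"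
      by (simp add: power2_eq_square algebra_simps)
    ultimately show ?thesis by linarith
  qed
  have k2: "h^2 * a^2 \<le> L * h * a^2"
    using h by (simp add: power2_eq_square mult_right_mono)
  have "(g (i+1))^2 = (g i)^2 + 2 * h * a * g i + h^2 * a^2" unfolding gi
    by (simp add: power2_eq_square algebra_simps)
  also have "\<dots> \<le> (g i)^2 + (1+L) * h * a^2 + h * (g i)^2"
    using k1 k2 by (simp add: algebra_simps)
  also have "\<dots> \<le> (1+L)*h*(\<Sum>i\<in>{0..<i}. (dx h g i)^2) + h*(\<Sum>i\<in>{0..<i}. (g i)^2) + (1+L) * h * a^2 + h * (g i)^2"
    using step(2) by simp
  also have "\<dots> = (1+L)*h*(\<Sum>i\<in>{0..<i+1}. (dx h g i)^2) + h*(\<Sum>i\<in>{0..<i+1}. (g i)^2)"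
    unfolding set by (simp add: a_def algebra_simps)
  finally show ?case .
qed

lemma sum_0M:
  fixes X :: "int \<Rightarrow> real"
  assumes "X 0 = 0" 
  shows "(\<Sum>i\<in>{0..<int M}. X i) = (\<Sum>i\<in>{1..int M - 1}. X i)"
proof (cases "M = 0")
  case False
  then have "{0..<int M} = insert 0 {1..int M - 1}" by auto
  then show ?thesis using assms by simp
qed simp

lemma sum_le_0M:
  fixes X :: "int \<Rightarrow> real"
  assumes "\<And>i. 0 \<le> X i" "0 \<le> k" "k \<le> int M"
  shows "(\<Sum>i\<in>{0..<k}. X i) \<le> (\<Sum>i\<in>{0..<int M}. X i)"
  by (rule sum_mono2) (use assms in auto)

lemma gnorm2_sq: "gnorm2 h M f = h * (\<Sum>i\<in>{1..int M - 1}. (f i)^2)"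
  by (simp add: gnorm2_def gip_def power2_eq_square)

lemma sob_Z0:
  assumes Z: "Z0 M f" and h: "0 < h" "h \<le> L" and k: "1 \<le> k" "k \<le> int M - 1"
  shows "(f k)^2 \<le> (1+L) * gnorm2 h M (dx h f) + gnorm2 h M f"
proof -
  have f0: "f 0 = 0" "f 1 = 0" using Z by (auto simp: Z0_def)
  have "(f k)^2 \<le> (1+L)*h*(\<Sum>i\<in>{0..<k}. (dx h f i)^2) + h*(\<Sum>i\<in>{0..<k}. (f i)^2)"
    using sob_step[of f h L k] f0 h k by simp
  also have "\<dots> \<le> (1+L)*h*(\<Sum>i\<in>{0..<int M}. (dx h f i)^2) + h*(\<Sum>i\<in>{0..<int M}. (f i)^2)"
    using h k by (intro add_mono mult_left_mono sum_le_0M) auto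
  also have "\<dots> = (1+L) * gnorm2 h M (dx h f) + gnorm2 h M f"
    unfolding gnorm2_sq by (subst sum_0M, simp add: dx_def f0)+ simp
  finally show ?thesis .
qed

lemma sob_dx:
  assumes Z: "Z0 M f" and h: "0 < h" "h \<le> L" and k: "1 \<le> k" "k \<le> int M - 1"
  shows "(dx h f k)^2 \<le> (1+L) * gnorm2 h M (dx h (dxb h f)) + gnorm2 h M (dx h f)"
proof -
  have f0: "f 0 = 0" "f 1 = 0" "f (int M - 1) = 0" "f (int M) = 0" "f (int M + 1) = 0"
    using Z by (auto simp: Z0_def)
  let ?g = "dx h f"
  have g0: "?g 0 = 0" using f0 by (simp add: dx_def)
  have "(?g k)^2 \<le> (1+L)*h*(\<Sum>i\<in>{0..<k}. (dx h ?g i)^2) + h*(\<Sum>i\<in>{0..<k}. (?g i)^2)"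
    using sob_step[of ?g h L k] g0 h k by simp
  also have "\<dots> \<le> (1+L)*h*(\<Sum>i\<in>{0..<int M}. (dx h ?g i)^2) + h*(\<Sum>i\<in>{0..<int M}. (?g i)^2)"
    using h k by (intro add_mono mult_left_mono sum_le_0M) auto
  also have "(\<Sum>i\<in>{0..<int M}. (dx h ?g i)^2) = (\<Sum>i\<in>{1..int M - 1}. (dx h (dxb h f) i)^2)"
  proof -
    have im: "(\<lambda>i. i+1) ` {0..<int M} = {1..int M}"
      by (auto simp: image_iff intro!: bexI[where x="_ - 1"])
    have "(\<Sum>i\<in>{0..<int M}. (dx h ?g i)^2) = (\<Sum>i\<in>{0..<int M}. (dx h (dxb h f) (i+1))^2)"
      by (simp add: dx_def dxb_def add.commute)
    also have "\<dots> = (\<Sum>j\<in>(\<lambda>i. i+1) ` {0..<int M}. (dx h (dxb h f) j)^2)"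
      by (subst sum.reindex) (auto simp: inj_on_def)
    also have "\<dots> = (\<Sum>j\<in>{1..int M}. (dx h (dxb h f) j)^2)" by (simp only: im)
    also have "\<dots> = (\<Sum>j\<in>{1..int M - 1}. (dx h (dxb h f) j)^2)"
    proof (cases "M = 0")
      case False
      then have "{1..int M} = insert (int M) {1..int M - 1}" by auto
      moreover have "dx h (dxb h f) (int M) = 0" using f0 by (simp add: dx_def dxb_def)
      ultimately show ?thesis by simp
    qed simp
    finally show ?thesis .
  qed
  also have "(\<Sum>i\<in>{0..<int M}. (?g i)^2) = (\<Sum>i\<in>{1..int M - 1}. (?g i)^2)"
    by (rule sum_0M) (simp add: g0)
  finally show ?thesis unfolding gnorm2_sq by simp
qed

lemma gn_bound:
  assumes "\<And>i. i \<in> {1..int M - 1} \<Longrightarrow> \<bar>F i\<bar> \<le> K" "0 \<le> h"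
  shows "gnorm2 h M F \<le> h * real M * K^2"
proof -
  have "(\<Sum>i\<in>{1..int M - 1}. (F i)^2) \<le> of_nat (card {1..int M - 1}) * K^2"
  proof (rule sum_bounded_above)
    fix i assume "i \<in> {1..int M - 1}"
    then have "\<bar>F i\<bar> \<le> K" by (rule assms)
    then show "(F i)^2 \<le> K^2"
      by (metis abs_ge_zero abs_le_square_iff power2_abs abs_of_nonneg order_trans)
  qed
  also have "\<dots> \<le> real M * K^2" by (intro mult_right_mono) auto
  finally show ?thesis unfolding gnorm2_sq using assms(2)
    by (simp add: mult.assoc mult_left_mono)
qed

lemma abs_le_1sq: "\<bar>x::real\<bar> \<le> 1 + x^2"
proof (cases "\<bar>x\<bar> \<le> 1")
  case True
  then show ?thesis by (smt (verit) zero_le_power2)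
next
  case False
  then have "\<bar>x\<bar> * 1 \<le> \<bar>x\<bar> * \<bar>x\<bar>" by (intro mult_left_mono) auto
  also have "\<bar>x\<bar> * \<bar>x\<bar> = x^2" by (simp add: power2_eq_square abs_mult_self_eq)
  finally show ?thesis by simp
qed

lemma gnorm2_nonneg: "0 \<le> h \<Longrightarrow> 0 \<le> gnorm2 h M f"
  unfolding gnorm2_sq by (simp add: sum_nonneg)

lemma energy_Qf: "energy al lam h M U n = (Qf al lam h M (U (n+1)) + Qf al lam h M (U n)) / 2"
  unfolding energy_def Qf_def by (simp add: field_simps)

lemma Qf_nonneg: "0 \<le> h \<Longrightarrow> 0 < al \<Longrightarrow> 0 < lam \<Longrightarrow> 0 \<le> Qf al lam h M f"
  unfolding Qf_def using gnorm2_nonneg[of h M] by (simp add: add_nonneg_nonneg)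

lemma energy_const:
  assumes tau: "\<tau> \<noteq> 0" and Z: "\<forall>n\<le>N. Z0 M (U n)"
    and S: "\<forall>n. 1 \<le> n \<and> n \<le> N - 1 \<longrightarrow> (\<forall>i. 2 \<le> i \<and> i \<le> int M - 2 \<longrightarrow> scheme_S m a b c nu al lam h \<tau> U n i)"
  shows "n \<le> N - 1 \<Longrightarrow> energy al lam h M U n = energy al lam h M U 0"
proof (induct n)
  case 0
  show ?case by simp
next
  case (Suc k)
  have Q: "Qf al lam h M (U (Suc k + 1)) = Qf al lam h M (U (Suc k - 1))"
    by (rule step_S[where m=m and a=a and b=b and c=c and nu=nu])
       (use Z S Suc.prems tau in auto)
  have "energy al lam h M U (Suc k) = energy al lam h M U k"
    unfolding energy_Qf using Q by (simp add: add.commute)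
  then show ?case using Suc by simp
qed

lemma bound_U0:
  fixes D :: "nat \<Rightarrow> real \<Rightarrow> real"
  assumes der: "\<And>k x. k < 7 \<Longrightarrow> x \<in> {xl..xr} \<Longrightarrow> (D k has_real_derivative D (Suc k) x) (at x within {xl..xr})"
    and K0: "\<forall>x\<in>{xl..xr}. \<bar>D 0 x\<bar> \<le> K0" and K1: "\<forall>x\<in>{xl..xr}. \<bar>D 1 x\<bar> \<le> K1"
    and K2: "\<forall>x\<in>{xl..xr}. \<bar>D 2 x\<bar> \<le> K2"
    and M: "M \<ge> 4" and xlr: "xl < xr" and hdef: "h = (xr - xl) / real M"
    and U0: "\<And>i. 0 \<le> i \<Longrightarrow> i \<le> int M \<Longrightarrow> U0 i = D 0 (xl + real_of_int i * h)"
    and al: "0 < al" and lam: "0 < lam"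
  shows "Qf al lam h M U0 \<le> (xr - xl) * (K0^2 + al * K1^2 + lam * (2*K2)^2)"
proof -
  have h: "0 < h" using M xlr hdef by simp
  have hM: "h * real M = xr - xl" using M hdef by simp
  have grid: "xl + real_of_int i * h \<in> {xl..xr}" if "0 \<le> i" "i \<le> int M" for i
  proof -
    have "real_of_int i * h \<le> real M * h" using that h by (intro mult_right_mono) auto
    then show ?thesis using that h hM by (auto simp: mult.commute)
  qed
  have der0: "\<And>x. x \<in> {xl..xr} \<Longrightarrow> (D 0 has_real_derivative D 1 x) (at x within {xl..xr})"
    using der[of 0] by simp
  have der1: "\<And>x. x \<in> {xl..xr} \<Longrightarrow> (D 1 has_real_derivative D 2 x) (at x within {xl..xr})"
    using der[of 1] by (simp add: numeral_2_eq_2)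
  have b0: "\<bar>U0 i\<bar> \<le> K0" if "i \<in> {1..int M - 1}" for i
    using that U0[of i] grid[of i] K0 by auto
  have mv: "\<exists>z. xl + real_of_int i * h < z \<and> z < xl + real_of_int i * h + h \<and> dx h U0 i = D 1 z"
    if "0 \<le> i" "i \<le> int M - 1" for i
  proof -
    have y: "xl \<le> xl + real_of_int i * h" using that h by simp
    have yh: "xl + real_of_int i * h + h \<le> xr" using grid[of "i+1"] that by (simp add: algebra_simps)
    obtain z where z: "xl + real_of_int i * h < z" "z < xl + real_of_int i * h + h"
      "(D 0 (xl + real_of_int i * h + h) - D 0 (xl + real_of_int i * h)) / h = D 1 z"
      using mvt_within[OF der0 y h yh] by blast
    have "dx h U0 i = (D 0 (xl + real_of_int i * h + h) - D 0 (xl + real_of_int i * h)) / h"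
      unfolding dx_def using U0[of i] U0[of "i+1"] that by (simp add: algebra_simps)
    then show ?thesis using z by auto
  qed
  have b1: "\<bar>dx h U0 i\<bar> \<le> K1" if iI: "i \<in> {1..int M - 1}" for i
  proof -
    obtain z where z: "xl + real_of_int i * h < z" "z < xl + real_of_int i * h + h" "dx h U0 i = D 1 z"
    proof -
      have "0 \<le> i" "i \<le> int M - 1" using iI by auto
      from mv[OF this] show ?thesis using that by blast
    qed
    have "0 \<le> real_of_int i * h" using iI h by simp
    moreover have "xl + real_of_int i * h + h \<le> xr" using grid[of "i+1"] iI by (simp add: algebra_simps)
    ultimately have "z \<in> {xl..xr}" using z(1,2) by simp
    then show ?thesis using K1 z by auto
  qed
  have b2: "\<bar>dx h (dxb h U0) i\<bar> \<le> 2 * K2" if iI: "i \<in> {1..int M - 1}" for i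
  proof -
    obtain z1 where z1: "xl + real_of_int i * h < z1" "z1 < xl + real_of_int i * h + h" "dx h U0 i = D 1 z1"
    proof -
      have "0 \<le> i" "i \<le> int M - 1" using iI by auto
      from mv[OF this] show ?thesis using that by blast
    qed
    obtain z0 where z0: "xl + real_of_int (i-1) * h < z0" "z0 < xl + real_of_int (i-1) * h + h" "dx h U0 (i-1) = D 1 z0"
    proof -
      have "0 \<le> i - 1" "i - 1 \<le> int M - 1" using iI by auto
      from mv[OF this] show ?thesis using that by blast
    qed
    have e: "real_of_int (i-1) * h + h = real_of_int i * h" by (simp add: algebra_simps)
    have "0 \<le> real_of_int (i-1) * h" using iI h by simp
    then have z0I: "xl \<le> z0" using z0(1) by linarith
    have "xl + real_of_int i * h + h \<le> xr" using grid[of "i+1"] iI by (simp add: algebra_simps)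
    then have z1I: "z0 + (z1 - z0) \<le> xr" using z1(2) by simp
    have pos: "0 < z1 - z0" using z0 z1 e by linarith
    obtain \<zeta> where zeta: "z0 < \<zeta>" "\<zeta> < z0 + (z1 - z0)" "(D 1 (z0 + (z1 - z0)) - D 1 z0) / (z1 - z0) = D 2 \<zeta>"
      using mvt_within[OF der1 z0I pos z1I] by blast
    have zetaI: "\<zeta> \<in> {xl..xr}" using zeta z0I z1I by auto
    have "D 1 z1 - D 1 z0 = D 2 \<zeta> * (z1 - z0)"
      using zeta(3) pos by (simp add: field_simps)
    then have "\<bar>D 1 z1 - D 1 z0\<bar> = \<bar>D 2 \<zeta>\<bar> * (z1 - z0)"
      using pos by (simp add: abs_mult)
    also have "\<dots> \<le> K2 * (2 * h)"
    proof (rule mult_mono)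
      show "\<bar>D 2 \<zeta>\<bar> \<le> K2" using K2 zetaI by auto
      show "z1 - z0 \<le> 2 * h" using z0 z1 e by linarith
      show "0 \<le> K2" using K2 zetaI by (meson abs_ge_zero order_trans)
    qed (use pos in auto)
    finally have A: "\<bar>D 1 z1 - D 1 z0\<bar> \<le> K2 * (2 * h)" .
    have "dx h (dxb h U0) i = (dx h U0 i - dx h U0 (i-1)) / h"
      by (simp add: dx_def dxb_def)
    also have "\<dots> = (D 1 z1 - D 1 z0) / h" using z0 z1 by simp
    finally show ?thesis using A h by (simp add: abs_divide pos_divide_le_eq)
  qed
  have "Qf al lam h M U0 \<le> h * real M * K0^2 + al * (h * real M * K1^2) + lam * (h * real M * (2*K2)^2)"
    unfolding Qf_def
    using gn_bound[of M U0 K0 h, OF b0] gn_bound[of M "dx h U0" K1 h, OF b1]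
      gn_bound[of M "dx h (dxb h U0)" "2*K2" h, OF b2] h al lam
    by (intro add_mono mult_left_mono) auto
  also have "\<dots> = (xr - xl) * (K0^2 + al * K1^2 + lam * (2*K2)^2)"
    unfolding hM[symmetric] by (simp add: algebra_simps)
  finally show ?thesis .
qed

theorem theorem2:
  fixes m :: nat and a b c \<nu> \<alpha> lam xl xr T :: real and u0 :: "real \<Rightarrow> real"
  assumes "m \<ge> 1" and "\<alpha> > 0" and "lam > 0" and "xl < xr" and "T > 0"
    and "C7_0 xl xr u0"
  shows
   "(\<forall>(M::nat) (N::nat) (U :: nat \<Rightarrow> int \<Rightarrow> real).
       let h = (xr - xl) / real M; \<tau> = T / real N in
       M \<ge> 4 \<longrightarrow> N \<ge> 2 \<longrightarrow> (\<forall>n\<le>N. Z0 M (U n)) \<longrightarrow>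
       (\<forall>n. 1 \<le> n \<and> n \<le> N - 1 \<longrightarrow> (\<forall>i. 2 \<le> i \<and> i \<le> int M - 2 \<longrightarrow>
            scheme_S m a b c \<nu> \<alpha> lam h \<tau> U n i)) \<longrightarrow>
       (\<forall>n\<le>N - 1. energy \<alpha> lam h M U n = energy \<alpha> lam h M U 0))
    \<and>
    (\<exists>C>0. \<forall>(M::nat) (N::nat) (U :: nat \<Rightarrow> int \<Rightarrow> real).
       let h = (xr - xl) / real M; \<tau> = T / real N in
       M \<ge> 4 \<longrightarrow> N \<ge> 2 \<longrightarrow> (\<forall>n\<le>N. Z0 M (U n)) \<longrightarrow>
       (\<forall>n. 1 \<le> n \<and> n \<le> N - 1 \<longrightarrow> (\<forall>i. 2 \<le> i \<and> i \<le> int M - 2 \<longrightarrow>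
            scheme_S m a b c \<nu> \<alpha> lam h \<tau> U n i)) \<longrightarrow>
       (\<forall>i. 0 \<le> i \<and> i \<le> int M \<longrightarrow> U 0 i = u0 (xl + real_of_int i * h)) \<longrightarrow>
       (\<forall>i. 2 \<le> i \<and> i \<le> int M - 2 \<longrightarrow> scheme_CN m a b c \<nu> \<alpha> lam h \<tau> (U 0) (U 1) i) \<longrightarrow>
       (gnorm2 h M (U 1) + \<alpha> * gnorm2 h M (dx h (U 1)) + lam * gnorm2 h M (dx h (dxb h (U 1)))
          = gnorm2 h M (U 0) + \<alpha> * gnorm2 h M (dx h (U 0)) + lam * gnorm2 h M (dx h (dxb h (U 0))))
       \<and> (\<forall>n\<le>N. gsup M (U n) \<le> C \<and> gsup M (dx h (U n)) \<le> C))"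
proof -
  define L where "L = xr - xl"
  have L: "0 < L" using assms(4) by (simp add: L_def)
  have P1: "\<forall>(M::nat) (N::nat) (U :: nat \<Rightarrow> int \<Rightarrow> real).
       let h = (xr - xl) / real M; \<tau> = T / real N in
       M \<ge> 4 \<longrightarrow> N \<ge> 2 \<longrightarrow> (\<forall>n\<le>N. Z0 M (U n)) \<longrightarrow>
       (\<forall>n. 1 \<le> n \<and> n \<le> N - 1 \<longrightarrow> (\<forall>i. 2 \<le> i \<and> i \<le> int M - 2 \<longrightarrow>
            scheme_S m a b c \<nu> \<alpha> lam h \<tau> U n i)) \<longrightarrow>
       (\<forall>n\<le>N - 1. energy \<alpha> lam h M U n = energy \<alpha> lam h M U 0)"
    unfolding Let_def
  proof (intro allI impI)
    fix M N :: nat and U :: "nat \<Rightarrow> int \<Rightarrow> real" and n :: nat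
    assume "4 \<le> M" "2 \<le> N" and Z: "\<forall>n\<le>N. Z0 M (U n)"
      and S: "\<forall>n. 1 \<le> n \<and> n \<le> N - 1 \<longrightarrow> (\<forall>i. 2 \<le> i \<and> i \<le> int M - 2 \<longrightarrow>
            scheme_S m a b c \<nu> \<alpha> lam ((xr - xl) / real M) (T / real N) U n i)" and n: "n \<le> N - 1"
    have tau: "T / real N \<noteq> 0" using \<open>2 \<le> N\<close> assms(5) by simp
    show "energy \<alpha> lam ((xr - xl) / real M) M U n = energy \<alpha> lam ((xr - xl) / real M) M U 0"
      by (rule energy_const[OF tau Z S n])
  qed
  obtain D :: "nat \<Rightarrow> real \<Rightarrow> real" where
    D0: "\<forall>x\<in>{xl..xr}. D 0 x = u0 x" and
    der: "\<forall>k<7. \<forall>x\<in>{xl..xr}. (D k has_real_derivative D (Suc k) x) (at x within {xl..xr})"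
    using assms(6) unfolding C7_0_def by blast
  have der': "\<And>k x. k < 7 \<Longrightarrow> x \<in> {xl..xr} \<Longrightarrow> (D k has_real_derivative D (Suc k) x) (at x within {xl..xr})"
    using der by blast
  obtain K0 where K0: "\<forall>x\<in>{xl..xr}. \<bar>D 0 x\<bar> \<le> K0"
    using deriv_bound[of xl xr "D 0" "D 1"] der' by fastforce
  obtain K1 where K1: "\<forall>x\<in>{xl..xr}. \<bar>D 1 x\<bar> \<le> K1"
    using deriv_bound[of xl xr "D 1" "D 2"] der'[of 1] by (fastforce simp: numeral_2_eq_2)
  obtain K2 where K2: "\<forall>x\<in>{xl..xr}. \<bar>D 2 x\<bar> \<le> K2"
    using deriv_bound[of xl xr "D 2" "D 3"] der'[of 2] by (fastforce simp: numeral_3_eq_3 numeral_2_eq_2)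
  define B where "B = (xr - xl) * (K0^2 + \<alpha> * K1^2 + lam * (2*K2)^2)"
  have B0: "0 \<le> B" unfolding B_def using assms(2,3,4) by (intro mult_nonneg_nonneg add_nonneg_nonneg) auto
  define C where "C = 1 + ((1+L)*(2*B/\<alpha>) + 2*B) + ((1+L)*(2*B/lam) + 2*B/\<alpha>)"
  have CA: "1 + ((1+L)*(2*B/\<alpha>) + 2*B) \<le> C" unfolding C_def using B0 L assms(2,3) by simp
  have CB: "1 + ((1+L)*(2*B/lam) + 2*B/\<alpha>) \<le> C" unfolding C_def using B0 L assms(2,3) by simp
  have C0: "0 < C" using CA B0 L assms(2) by (smt (verit) divide_nonneg_pos mult_nonneg_nonneg)
  have P2: "\<forall>(M::nat) (N::nat) (U :: nat \<Rightarrow> int \<Rightarrow> real).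
       let h = (xr - xl) / real M; \<tau> = T / real N in
       M \<ge> 4 \<longrightarrow> N \<ge> 2 \<longrightarrow> (\<forall>n\<le>N. Z0 M (U n)) \<longrightarrow>
       (\<forall>n. 1 \<le> n \<and> n \<le> N - 1 \<longrightarrow> (\<forall>i. 2 \<le> i \<and> i \<le> int M - 2 \<longrightarrow>
            scheme_S m a b c \<nu> \<alpha> lam h \<tau> U n i)) \<longrightarrow>
       (\<forall>i. 0 \<le> i \<and> i \<le> int M \<longrightarrow> U 0 i = u0 (xl + real_of_int i * h)) \<longrightarrow>
       (\<forall>i. 2 \<le> i \<and> i \<le> int M - 2 \<longrightarrow> scheme_CN m a b c \<nu> \<alpha> lam h \<tau> (U 0) (U 1) i) \<longrightarrow>
       (gnorm2 h M (U 1) + \<alpha> * gnorm2 h M (dx h (U 1)) + lam * gnorm2 h M (dx h (dxb h (U 1)))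
          = gnorm2 h M (U 0) + \<alpha> * gnorm2 h M (dx h (U 0)) + lam * gnorm2 h M (dx h (dxb h (U 0))))
       \<and> (\<forall>n\<le>N. gsup M (U n) \<le> C \<and> gsup M (dx h (U n)) \<le> C)"
    unfolding Let_def
  proof (intro allI impI)
    fix M N :: nat and U :: "nat \<Rightarrow> int \<Rightarrow> real"
    define h where "h = (xr - xl) / real M"
    define \<tau> where "\<tau> = T / real N"
    assume M: "4 \<le> M" and N: "2 \<le> N" and Z: "\<forall>n\<le>N. Z0 M (U n)"
      and S: "\<forall>n. 1 \<le> n \<and> n \<le> N - 1 \<longrightarrow> (\<forall>i. 2 \<le> i \<and> i \<le> int M - 2 \<longrightarrow>
            scheme_S m a b c \<nu> \<alpha> lam ((xr - xl) / real M) (T / real N) U n i)"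
      and I0: "\<forall>i. 0 \<le> i \<and> i \<le> int M \<longrightarrow> U 0 i = u0 (xl + real_of_int i * ((xr - xl) / real M))"
      and CN: "\<forall>i. 2 \<le> i \<and> i \<le> int M - 2 \<longrightarrow> scheme_CN m a b c \<nu> \<alpha> lam ((xr - xl) / real M) (T / real N) (U 0) (U 1) i"
    note S = S[folded h_def \<tau>_def] and I0 = I0[folded h_def] and CN = CN[folded h_def \<tau>_def]
    have "(xr-xl) * 1 \<le> (xr-xl) * real M" using M assms(4) by (intro mult_left_mono) auto
    then have h: "0 < h" "h \<le> L" using M assms(4) unfolding h_def L_def by (auto simp: divide_le_eq)
    have tau: "\<tau> \<noteq> 0" using N assms(5) unfolding \<tau>_def by simp
    have Qc: "Qf \<alpha> lam h M (U 1) = Qf \<alpha> lam h M (U 0)"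
      by (rule step_CN[where m=m and a=a and b=b and c=c and nu=\<nu> and \<tau>=\<tau>]) (use Z N CN tau in auto)
    have E: "energy \<alpha> lam h M U n = energy \<alpha> lam h M U 0" if "n \<le> N - 1" for n
      by (rule energy_const[OF tau Z S that])
    have E0: "energy \<alpha> lam h M U 0 = Qf \<alpha> lam h M (U 0)" unfolding energy_Qf using Qc by simp
    have U0: "U 0 i = D 0 (xl + real_of_int i * h)" if "0 \<le> i" "i \<le> int M" for i
    proof -
      have "real_of_int i * h \<le> real M * h" using that h by (intro mult_right_mono) auto
      moreover have "real M * h = xr - xl" using M unfolding h_def by simp
      ultimately have "xl + real_of_int i * h \<in> {xl..xr}" using that h by auto
      then show ?thesis using I0 that D0 by auto
    qed
    have QB: "Qf \<alpha> lam h M (U 0) \<le> B"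
      unfolding B_def by (rule bound_U0[OF der' K0 K1 K2 M assms(4) h_def U0 assms(2,3)])
    have Qn: "Qf \<alpha> lam h M (U n) \<le> 2 * B" if "n \<le> N" for n
    proof -
      have nn: "0 \<le> Qf \<alpha> lam h M f" for f using Qf_nonneg h assms(2,3) by simp
      have "Qf \<alpha> lam h M (U n) \<le> 2 * Qf \<alpha> lam h M (U 0)"
      proof (cases "n \<le> N - 1")
        case True
        then show ?thesis using E[OF True] E0 nn[of "U (n+1)"] unfolding energy_Qf by simp
      next
        case False
        then have n: "n = (N - 1) + 1" using that N by simp
        show ?thesis using E[of "N-1"] E0 nn[of "U (N-1)"] unfolding energy_Qf n by simp
      qed
      then show ?thesis using QB by simp
    qed
    show "gnorm2 h M (U 1) + \<alpha> * gnorm2 h M (dx h (U 1)) + lam * gnorm2 h M (dx h (dxb h (U 1)))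
          = gnorm2 h M (U 0) + \<alpha> * gnorm2 h M (dx h (U 0)) + lam * gnorm2 h M (dx h (dxb h (U 0)))
       \<and> (\<forall>n\<le>N. gsup M (U n) \<le> C \<and> gsup M (dx h (U n)) \<le> C)"
    proof (intro conjI allI impI)
      show "gnorm2 h M (U 1) + \<alpha> * gnorm2 h M (dx h (U 1)) + lam * gnorm2 h M (dx h (dxb h (U 1)))
          = gnorm2 h M (U 0) + \<alpha> * gnorm2 h M (dx h (U 0)) + lam * gnorm2 h M (dx h (dxb h (U 0)))"
        using Qc unfolding Qf_def .
    next
      fix n assume n: "n \<le> N"
      have Zn: "Z0 M (U n)" using Z n by simp
      have g0: "0 \<le> gnorm2 h M (U n)" "0 \<le> gnorm2 h M (dx h (U n))" "0 \<le> gnorm2 h M (dx h (dxb h (U n)))"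
        using gnorm2_nonneg h by auto
      have Q: "gnorm2 h M (U n) + \<alpha> * gnorm2 h M (dx h (U n)) + lam * gnorm2 h M (dx h (dxb h (U n))) \<le> 2 * B"
        using Qn[OF n] unfolding Qf_def .
      have a0: "gnorm2 h M (U n) \<le> 2 * B"
        using Q g0 assms(2,3) by (smt (verit) mult_nonneg_nonneg)
      have a1: "gnorm2 h M (dx h (U n)) \<le> 2 * B / \<alpha>"
        using Q g0 assms(2,3) by (simp add: pos_le_divide_eq) (smt (verit) mult_nonneg_nonneg mult.commute)
      have a2: "gnorm2 h M (dx h (dxb h (U n))) \<le> 2 * B / lam"
        using Q g0 assms(2,3) by (simp add: pos_le_divide_eq) (smt (verit) mult_nonneg_nonneg mult.commute)
      have ne: "{1..int M - 1} \<noteq> {}" using M by auto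
      show "gsup M (U n) \<le> C"
        unfolding gsup_def
      proof (subst Max_le_iff)
        show "\<forall>a\<in>(\<lambda>i. \<bar>U n i\<bar>) ` {1..int M - 1}. a \<le> C"
        proof
          fix x assume "x \<in> (\<lambda>i. \<bar>U n i\<bar>) ` {1..int M - 1}"
          then obtain k where k: "k \<in> {1..int M - 1}" "x = \<bar>U n k\<bar>" by auto
          have "(U n k)^2 \<le> (1+L) * gnorm2 h M (dx h (U n)) + gnorm2 h M (U n)"
            using sob_Z0[OF Zn h] k by auto
          also have "\<dots> \<le> (1+L) * (2 * B / \<alpha>) + 2 * B"
            using a0 a1 L by (intro add_mono mult_left_mono) auto
          finally show "x \<le> C" using k(2) abs_le_1sq[of "U n k"] CA by linarith
        qed
      qed (use ne in auto)
      show "gsup M (dx h (U n)) \<le> C"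
        unfolding gsup_def
      proof (subst Max_le_iff)
        show "\<forall>a\<in>(\<lambda>i. \<bar>dx h (U n) i\<bar>) ` {1..int M - 1}. a \<le> C"
        proof
          fix x assume "x \<in> (\<lambda>i. \<bar>dx h (U n) i\<bar>) ` {1..int M - 1}"
          then obtain k where k: "k \<in> {1..int M - 1}" "x = \<bar>dx h (U n) k\<bar>" by auto
          have "(dx h (U n) k)^2 \<le> (1+L) * gnorm2 h M (dx h (dxb h (U n))) + gnorm2 h M (dx h (U n))"
            using sob_dx[OF Zn h] k by auto
          also have "\<dots> \<le> (1+L) * (2 * B / lam) + 2 * B / \<alpha>"
            using a2 a1 L by (intro add_mono mult_left_mono) auto
          finally show "x \<le> C" using k(2) abs_le_1sq[of "dx h (U n) k"] CB by linarith
        qed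
      qed (use ne in auto)
    qed
  qed
  show ?thesis using P1 P2 C0 by blast
qed


end
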